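(* Let $G$ be a finite simple graph with edge ideal $I=I(G)$, fix a total order $L_1>L_2>\dots>L_k$ on the edges (minimal monomial generators) of $I$, and for each $n\geq 1$ let $L^{(n)}_1>L^{(n)}_2>\cdots$ be the minimal monomial generators of $I^n$ in the order described in the context. Then for every $n\geq1$, every $k'\geq1$ and every $j\leq k'$: if $(L^{(n)}_j : L^{(n)}_{k'+1})$ is not contained in $(I^{n+1}:L^{(n)}_{k'+1})$ and $L^{(n)}_j$ belongs to an edge that comes (strictly) before the edge that $L^{(n)}_{k'+1}$ belongs to, then there exists $i\leq k'$ such that $(L^{(n)}_i : L^{(n)}_{k'+1})$ is generated by a single variable, $(L^{(n)}_j : L^{(n)}_{k'+1})\subseteq (L^{(n)}_i : L^{(n)}_{k'+1})$, and $L^{(n)}_i$ belongs to an edge that comes before or is equal to the edge that $L^{(n)}_j$ belongs to.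
   Context: $S=K[\,x : x\in V(G)\,]$ is the polynomial ring over a field $K$ on the vertices and $I(G)=(xy : xy\text{ an edge})$. For monomials $m,m'$, $(m:m')$ denotes $((m):(m'))$. Ordering: each minimal monomial generator $M$ of $I^n$ can be written as $L_1^{a_1}\cdots L_k^{a_k}$ with $\sum a_i=n$; its maximal expression is the lexicographically largest such exponent vector. For minimal generators $M,N$ of $I^n$, $M>N$ iff the maximal expression of $M$ is lexicographically larger than that of $N$; for $n=1$ this is the fixed order. $L^{(n)}_1>L^{(n)}_2>\cdots$ lists all minimal monomial generators of $I^n$ decreasingly. The edge $L_a$ comes before $L_b$ if $a<b$. For $n\geq2$ and monomials $m_1\in\mathrm{Mingens}(I^{p})$, $m_2\in\mathrm{Mingens}(I^n)$ with $n>p$, write $m_1\mid^{\mathrm{edge}} m_2$ if $m_2=m_1m_3$ for some minimal monomial generator $m_3$ of $I^{n-p}$. A minimal generator $m$ of $I^n$, $n\ge2$, belongs to the edge $L_i$ if $i$ is the least index with $L_i\mid^{\mathrm{edge}} m$; for $n=1$, $L_i$ belongs to $L_i$. *)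

theory Defs
  imports Main "HOL-Library.Multiset"
begin

text \<open>Monomials in the variables of type 'v are multisets of variables (exponent vectors);
  product is +, divisibility is the sub-multiset relation.  A monomial ideal is represented
  by the set of monomials it contains (a monomial ideal is determined by, and containment of
  monomial ideals is equivalent to containment of, these sets).  The coefficient field K plays
  no role.  The edges L_1 > L_2 > ... > L_k are given as a list L (L!0 = L_1, etc.).\<close>

definition edge_list :: "'v multiset list \<Rightarrow> bool" where
  "edge_list L \<longleftrightarrow> distinct L \<and> (\<forall>e\<in>set L. \<exists>x y. x \<noteq> y \<and> e = {#x, y#})"

definition principal :: "'v multiset \<Rightarrow> 'v multiset set" where
  "principal m = {u. m \<subseteq># u}"

definition colon :: "'v multiset set \<Rightarrow> 'v multiset \<Rightarrow> 'v multiset set" where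
  "colon J m = {u. u + m \<in> J}"

text \<open>products of n edges; these are the minimal monomial generators of I^n
  (all have degree 2n)\<close>
definition mingens :: "'v multiset list \<Rightarrow> nat \<Rightarrow> 'v multiset set" where
  "mingens L n = {sum_mset (image_mset (\<lambda>i. L ! i) A) | A.
      size A = n \<and> set_mset A \<subseteq> {..<length L}}"

definition powI :: "'v multiset list \<Rightarrow> nat \<Rightarrow> 'v multiset set" where
  "powI L n = {u. \<exists>g\<in>mingens L n. g \<subseteq># u}"

definition exprs :: "'v multiset list \<Rightarrow> 'v multiset \<Rightarrow> nat list set" where
  "exprs L M = {a. length a = length L \<and>
      M = (\<Sum>i<length L. repeat_mset (a ! i) (L ! i))}"

definition lex_gt :: "nat list \<Rightarrow> nat list \<Rightarrow> bool" where
  "lex_gt a b \<longleftrightarrow> length a = length b \<and>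
     (\<exists>i<length a. take i a = take i b \<and> a ! i > b ! i)"

definition maxexpr :: "'v multiset list \<Rightarrow> 'v multiset \<Rightarrow> nat list" where
  "maxexpr L M = (THE a. a \<in> exprs L M \<and> (\<forall>b\<in>exprs L M. b \<noteq> a \<longrightarrow> lex_gt a b))"

definition gen_gt :: "'v multiset list \<Rightarrow> 'v multiset \<Rightarrow> 'v multiset \<Rightarrow> bool" where
  "gen_gt L M N \<longleftrightarrow> lex_gt (maxexpr L M) (maxexpr L N)"

text \<open>gen L n j = L^{(n)}_j, the j-th largest minimal generator of I^n (1-indexed)\<close>
definition gen :: "'v multiset list \<Rightarrow> nat \<Rightarrow> nat \<Rightarrow> 'v multiset" where
  "gen L n j = (THE M. M \<in> mingens L n \<and>
      card {N \<in> mingens L n. gen_gt L N M} = j - 1)"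

definition edge_dvd :: "'v multiset list \<Rightarrow> nat \<Rightarrow> 'v multiset \<Rightarrow> nat \<Rightarrow> 'v multiset \<Rightarrow> bool" where
  "edge_dvd L p m1 n m2 \<longleftrightarrow> (\<exists>m3\<in>mingens L (n - p). m2 = m1 + m3)"

text \<open>index (0-based) of the edge that a minimal generator m of I^n belongs to\<close>
definition edge_of :: "'v multiset list \<Rightarrow> nat \<Rightarrow> 'v multiset \<Rightarrow> nat" where
  "edge_of L n m = (if n = 1 then (THE i. i < length L \<and> L ! i = m)
     else (LEAST i. i < length L \<and> edge_dvd L 1 (L ! i) n m))"

end

theory Submission
  imports Defs
begin

lemma two_split:
  assumes "size (r::'v multiset) = 2" "p \<in># r"
  shows "\<exists>w. r = {#p, w#}"
proof -
  have r: "r = add_mset p (r - {#p#})" using assms(2) by simp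
  have "size (r - {#p#}) = 1" using assms by (simp add: size_Diff_singleton)
  then obtain w where "r - {#p#} = {#w#}" using size_1_singleton_mset by blast
  with r show ?thesis by auto
qed

lemma in_sum_edge:
  assumes "p \<in># sum_mset (X::'v multiset multiset)"
  shows "\<exists>r. r \<in># X \<and> p \<in># r"
  using assms in_Union_mset_iff by metis

lemma add_sub: "a \<in># B - A \<Longrightarrow> A \<subseteq># B \<Longrightarrow> add_mset a A \<subseteq># B"
  by (metis add_mset_add_single subset_mset.add_diff_inverse subset_mset.add_le_cancel_left
      mset_subset_eq_single add.commute)

lemma sum_sub: "C \<subseteq># R \<Longrightarrow> sum_mset C \<subseteq># sum_mset (R::'a multiset multiset)"
  by (metis subset_mset.add_diff_inverse sum_mset.union mset_subset_eq_add_left)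

lemma walk:
  fixes R S :: "'v multiset multiset" and U :: "'v multiset" and u :: 'v
  assumes E2: "\<forall>r\<in>E. size r = 2"
  and RE: "set_mset R \<subseteq> E" and SE: "set_mset S \<subseteq> E"
  and noaug: "\<forall>T. set_mset T \<subseteq> E \<longrightarrow> size T = size R + 1 \<longrightarrow> \<not> sum_mset T \<subseteq># U"
  and U: "sum_mset R \<union># sum_mset S \<subseteq># U"
  and heavy: "count (sum_mset R) u < count (sum_mset S) u"
  shows "A \<subseteq># S \<Longrightarrow> C \<subseteq># R \<Longrightarrow> size A = size C + 1 \<Longrightarrow>
     sum_mset A = sum_mset C + {#u#} + {#p#} \<Longrightarrow>
     \<exists>A C z. A \<subseteq># S \<and> C \<subseteq># R \<and> size A = size C \<and>
       sum_mset A + {#z#} = sum_mset C + {#u#} \<and> count (sum_mset S) z < count (sum_mset R) z"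
proof (induction "size R - size C" arbitrary: A C p rule: less_induct)
  case less
  note A = less.prems
  show ?case
  proof (cases "count (sum_mset C) p < count (sum_mset R) p")
    case True
    have "p \<in># sum_mset (R - C)" using True A(2) by (simp add: sum_mset_diff in_diff_count)
    then obtain r where r: "r \<in># R - C" "p \<in># r" using in_sum_edge by blast
    have "r \<in># R" using r(1) by (meson in_diffD)
    with E2 RE have s2: "size r = 2" by auto
    obtain w where rw: "r = {#p, w#}" using two_split[OF s2 r(2)] by blast
    define C' where "C' = add_mset r C"
    have C'R: "C' \<subseteq># R" unfolding C'_def by (rule add_sub[OF r(1) A(2)])
    have sC': "sum_mset C' = sum_mset C + {#p#} + {#w#}" unfolding C'_def rw by (simp add: multiset_eq_iff)
    have eq1: "sum_mset A + {#w#} = sum_mset C' + {#u#}" using A(4) sC' by (simp add: multiset_eq_iff)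
    show ?thesis
    proof (cases "count (sum_mset S) w < count (sum_mset R) w")
      case True
      show ?thesis
        apply (rule exI[of _ A], rule exI[of _ C'], rule exI[of _ w])
        using A C'R eq1 True by (simp add: C'_def)
    next
      case False
      have cC': "count (sum_mset C') w \<le> count (sum_mset R) w"
        using C'R by (metis mset_subset_eq_count sum_sub)
      have cA: "count (sum_mset A) w < count (sum_mset S) w"
      proof -
        have "count (sum_mset A) w + 1 = count (sum_mset C') w + (if w = u then 1 else 0)"
          using arg_cong[OF eq1, of "\<lambda>X. count X w"] by auto
        then show ?thesis using cC' False heavy by (auto split: if_splits)
      qed
      have "w \<in># sum_mset (S - A)" using cA A(1) by (simp add: sum_mset_diff in_diff_count)
      then obtain a where a: "a \<in># S - A" "w \<in># a" using in_sum_edge by blast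
      have "a \<in># S" using a(1) by (meson in_diffD)
      with E2 SE have s2a: "size a = 2" by auto
      obtain p' where ap: "a = {#w, p'#}" using two_split[OF s2a a(2)] by blast
      define A' where "A' = add_mset a A"
      have A'S: "A' \<subseteq># S" unfolding A'_def by (rule add_sub[OF a(1) A(1)])
      have "sum_mset A' = (sum_mset A + {#w#}) + {#p'#}" unfolding A'_def ap by simp
      also have "\<dots> = sum_mset C' + {#u#} + {#p'#}" using eq1 by simp
      finally have eq2: "sum_mset A' = sum_mset C' + {#u#} + {#p'#}" .
      have "size C < size C'" by (simp add: C'_def)
      moreover have "size C' \<le> size R" using C'R by (simp add: size_mset_mono)
      ultimately have lt: "size R - size C' < size R - size C" by linarith
      have "size A' = size C' + 1" using A(3) by (simp add: A'_def C'_def)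
      from less.hyps[OF lt A'S C'R this eq2] show ?thesis .
    qed
  next
    case False
    define T where "T = R - C + A"
    have sT0: "size T = size (R - C) + size A" unfolding T_def by (rule size_union)
    have sT: "size T = size R + 1"
      using sT0 size_Diff_submset[OF A(2)] A(3) size_mset_mono[OF A(2)] by linarith
    have TE: "set_mset T \<subseteq> E" unfolding T_def using RE SE A(1)
      by (auto dest: in_diffD mset_subset_eqD)
    have sumT: "sum_mset T = sum_mset R - sum_mset C + sum_mset A"
      unfolding T_def sum_mset.union sum_mset_diff[OF A(2)] ..
    have CR: "sum_mset C \<subseteq># sum_mset R" using A(2) by (rule sum_sub)
    have AS: "sum_mset A \<subseteq># sum_mset S" using A(1) by (rule sum_sub)
    have "sum_mset T \<subseteq># sum_mset R \<union># sum_mset S"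
    proof (subst subseteq_mset_def, intro allI)
      fix q
      have cq: "count (sum_mset A) q = count (sum_mset C) q + (if q = u then 1 else 0) + (if q = p then 1 else 0)"
        using A(4) by auto
      have c1: "count (sum_mset C) q \<le> count (sum_mset R) q" using CR by (simp add: mset_subset_eq_count)
      have c2: "count (sum_mset A) q \<le> count (sum_mset S) q" using AS by (simp add: mset_subset_eq_count)
      show "count (sum_mset T) q \<le> count (sum_mset R \<union># sum_mset S) q"
        using cq c1 c2 False heavy unfolding sumT by (auto split: if_splits)
    qed
    with U have "sum_mset T \<subseteq># U" by (meson subset_mset.order_trans)
    with noaug TE sT show ?thesis by blast
  qed
qed

lemma size_sum2: "\<forall>r\<in>E. size r = 2 \<Longrightarrow> set_mset X \<subseteq> E \<Longrightarrow> size (sum_mset X) = 2 * size (X::'v multiset multiset)"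
  by (induction X) auto

lemma core:
  fixes R :: "'v multiset multiset" and U :: "'v multiset"
  assumes E2: "\<forall>r\<in>E. size r = 2"
  and RE: "set_mset R \<subseteq> E"
  and noaug: "\<forall>T. set_mset T \<subseteq> E \<longrightarrow> size T = size R + 1 \<longrightarrow> \<not> sum_mset T \<subseteq># U"
  and noeq: "\<forall>T. set_mset T \<subseteq> E \<longrightarrow> size T = size R \<longrightarrow> e \<in># T \<longrightarrow> sum_mset T \<noteq> sum_mset R"
  shows "set_mset S \<subseteq> E \<Longrightarrow> size S = size R \<Longrightarrow> sum_mset R \<union># sum_mset S \<subseteq># U \<Longrightarrow> e \<in># S \<Longrightarrow>
    \<exists>T u z. set_mset T \<subseteq> E \<and> size T = size R \<and> e \<in># T \<and>
      sum_mset T + {#z#} = sum_mset R + {#u#} \<and> u \<noteq> z \<and> count (sum_mset R) u < count (sum_mset S) u"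
proof (induction "size (sum_mset S - sum_mset R)" arbitrary: S rule: less_induct)
  case less
  note SE = less.prems(1) and sz = less.prems(2) and U = less.prems(3) and eS = less.prems(4)
  obtain u where heavy: "count (sum_mset R) u < count (sum_mset S) u"
  proof (rule ccontr)
    assume "\<not> thesis"
    with that have "\<forall>u. count (sum_mset S) u \<le> count (sum_mset R) u" by (meson not_le)
    then have sub: "sum_mset S \<subseteq># sum_mset R" by (simp add: subseteq_mset_def)
    have "size (sum_mset S) = size (sum_mset R)"
      using size_sum2[OF E2 SE] size_sum2[OF E2 RE] sz by simp
    then have "sum_mset S = sum_mset R"
      using sub by (metis subset_mset.less_le mset_subset_size less_irrefl)
    with noeq SE sz eS show False by blast
  qed
  have "u \<in># sum_mset S" using heavy by (metis not_less_zero not_in_iff)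
  then obtain a where a: "a \<in># S" "u \<in># a" using in_sum_edge by blast
  with E2 SE have s2a: "size a = 2" by auto
  obtain p where ap: "a = {#u, p#}" using two_split[OF s2a a(2)] by blast
  have st1: "{#a#} \<subseteq># S" using a(1) by simp
  have st2: "({#} :: 'v multiset multiset) \<subseteq># R" by simp
  have st4: "sum_mset {#a#} = sum_mset {#} + {#u#} + {#p#}" using ap by simp
  obtain A C z where W: "A \<subseteq># S" "C \<subseteq># R" "size A = size C"
     "sum_mset A + {#z#} = sum_mset C + {#u#}" "count (sum_mset S) z < count (sum_mset R) z"
    using walk[OF E2 RE SE noaug U heavy st1 st2 _ st4] by auto
  have uz: "u \<noteq> z" using heavy W(5) by auto
  have CR: "sum_mset C \<subseteq># sum_mset R" using W(2) by (rule sum_sub)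
  have AS: "sum_mset A \<subseteq># sum_mset S" using W(1) by (rule sum_sub)
  show ?case
  proof (cases "e \<in># A")
    case True
    define T where "T = R - C + A"
    have TE: "set_mset T \<subseteq> E" unfolding T_def using RE SE W(1)
      by (auto dest: in_diffD mset_subset_eqD)
    have sT0: "size T = size (R - C) + size A" unfolding T_def by (rule size_union)
    have sT: "size T = size R"
      using sT0 size_Diff_submset[OF W(2)] W(3) size_mset_mono[OF W(2)] by linarith
    have "sum_mset T + {#z#} = (sum_mset R - sum_mset C) + (sum_mset A + {#z#})"
      unfolding T_def sum_mset.union sum_mset_diff[OF W(2)] by (simp add: add.assoc)
    also have "\<dots> = (sum_mset R - sum_mset C) + sum_mset C + {#u#}" using W(4) by (simp add: add.assoc)
    also have "\<dots> = sum_mset R + {#u#}" using CR by (simp add: subset_mset.diff_add)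
    finally have eqT: "sum_mset T + {#z#} = sum_mset R + {#u#}" .
    have "e \<in># T" unfolding T_def using True by simp
    then show ?thesis using TE sT eqT uz heavy by blast
  next
    case False
    define S' where "S' = S - A + C"
    have S'E: "set_mset S' \<subseteq> E" unfolding S'_def using RE SE W(2)
      by (auto dest: in_diffD mset_subset_eqD)
    have sS'0: "size S' = size (S - A) + size C" unfolding S'_def by (rule size_union)
    have sS': "size S' = size R"
      using sS'0 size_Diff_submset[OF W(1)] W(3) size_mset_mono[OF W(1)] sz by linarith
    have eS': "e \<in># S'" unfolding S'_def using False eS
      by (metis in_diff_count count_greater_zero_iff union_iff not_in_iff gr0I)
    have cS': "\<And>q. count (sum_mset S') q + (if q = u then 1 else 0) = count (sum_mset S) q + (if q = z then 1 else 0)"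
    proof -
      fix q
      have c1: "count (sum_mset S') q = count (sum_mset S) q - count (sum_mset A) q + count (sum_mset C) q"
        unfolding S'_def sum_mset.union sum_mset_diff[OF W(1)] by simp
      have c2: "count (sum_mset A) q + (if q = z then 1 else 0) = count (sum_mset C) q + (if q = u then 1 else 0)"
        using arg_cong[OF W(4), of "\<lambda>X. count X q"] by (auto split: if_splits)
      have c3: "count (sum_mset A) q \<le> count (sum_mset S) q" using AS by (simp add: mset_subset_eq_count)
      show "count (sum_mset S') q + (if q = u then 1 else 0) = count (sum_mset S) q + (if q = z then 1 else 0)"
        using c1 c2 c3 by (auto split: if_splits)
    qed
    have U': "sum_mset R \<union># sum_mset S' \<subseteq># U"
    proof -
      have "sum_mset R \<union># sum_mset S' \<subseteq># sum_mset R \<union># sum_mset S"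
      proof (subst subseteq_mset_def, intro allI)
        fix q show "count (sum_mset R \<union># sum_mset S') q \<le> count (sum_mset R \<union># sum_mset S) q"
          using cS'[of q] W(5) uz by (auto split: if_splits)
      qed
      with U show ?thesis by (meson subset_mset.order_trans)
    qed
    have lt: "size (sum_mset S' - sum_mset R) < size (sum_mset S - sum_mset R)"
    proof -
      have "add_mset u (sum_mset S' - sum_mset R) \<subseteq># sum_mset S - sum_mset R"
      proof (subst subseteq_mset_def, intro allI)
        fix q show "count (add_mset u (sum_mset S' - sum_mset R)) q \<le> count (sum_mset S - sum_mset R) q"
          using cS'[of q] W(5) uz heavy by (auto split: if_splits)
      qed
      from size_mset_mono[OF this] show ?thesis by simp
    qed
    obtain T u' z' where T: "set_mset T \<subseteq> E" "size T = size R" "e \<in># T"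
      "sum_mset T + {#z'#} = sum_mset R + {#u'#}" "u' \<noteq> z'" "count (sum_mset R) u' < count (sum_mset S') u'"
      using less.hyps[OF lt S'E sS' U' eS'] by blast
    have "count (sum_mset R) u' < count (sum_mset S) u'"
      using T(6) cS'[of u'] W(5) uz by (auto split: if_splits)
    with T show ?thesis by blast
  qed
qed


lemma take_eq_nth: "take i a = take i b \<Longrightarrow> t < i \<Longrightarrow> t < length a \<Longrightarrow> t < length b \<Longrightarrow> a ! t = b ! t"
  by (metis nth_take)

lemma lex_gt_asym: "lex_gt a b \<Longrightarrow> \<not> lex_gt b a"
proof
  assume 1: "lex_gt a b" and 2: "lex_gt b a"
  obtain i where i: "i < length a" "take i a = take i b" "a ! i > b ! i" using 1 unfolding lex_gt_def by blast
  obtain j where j: "j < length b" "take j b = take j a" "b ! j > a ! j" using 2 unfolding lex_gt_def by blast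
  have len: "length a = length b" using 1 unfolding lex_gt_def by simp
  consider "i < j" | "j < i" | "i = j" by linarith
  then show False
  proof cases
    case 1 then have "b ! i = a ! i" using take_eq_nth[OF j(2)] i(1) len by simp
    with i(3) show False by simp
  next
    case 2 then have "a ! j = b ! j" using take_eq_nth[OF i(2)] j(1) len by simp
    with j(3) show False by simp
  next
    case 3 with i j show False by simp
  qed
qed

lemma lex_gt_irrefl: "\<not> lex_gt a a"
  using lex_gt_asym by blast

lemma lex_gt_trans: "lex_gt a b \<Longrightarrow> lex_gt b c \<Longrightarrow> lex_gt a c"
proof -
  assume 1: "lex_gt a b" and 2: "lex_gt b c"
  obtain i where i: "i < length a" "take i a = take i b" "a ! i > b ! i" using 1 unfolding lex_gt_def by blast
  obtain j where j: "j < length b" "take j b = take j c" "b ! j > c ! j" using 2 unfolding lex_gt_def by blast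
  have len: "length a = length b" "length b = length c" using 1 2 unfolding lex_gt_def by auto
  let ?m = "min i j"
  have tk: "take ?m a = take ?m c"
  proof -
    have "take ?m a = take ?m (take i a)" by (simp add: min_def)
    also have "\<dots> = take ?m (take i b)" using i(2) by simp
    also have "\<dots> = take ?m b" by (simp add: min_def)
    also have "\<dots> = take ?m (take j b)" by (simp add: min_def)
    also have "\<dots> = take ?m (take j c)" using j(2) by simp
    also have "\<dots> = take ?m c" by (simp add: min_def)
    finally show ?thesis .
  qed
  have "a ! ?m > c ! ?m"
  proof (cases "i < j")
    case True
    then have "b ! i = c ! i" using take_eq_nth[OF j(2)] i(1) len by simp
    with True i(3) show ?thesis by simp
  next
    case False
    show ?thesis
    proof (cases "j < i")
      case True
      then have "a ! j = b ! j" using take_eq_nth[OF i(2)] j(1) len by simp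
      with True j(3) show ?thesis by simp
    next
      case False
      with \<open>\<not> i < j\<close> have "i = j" by simp
      with i(3) j(3) show ?thesis by simp
    qed
  qed
  moreover have "?m < length a" using i(1) by simp
  ultimately show ?thesis using tk len unfolding lex_gt_def by auto
qed

lemma lex_gt_total: "length a = length b \<Longrightarrow> a \<noteq> b \<Longrightarrow> lex_gt a b \<or> lex_gt b a"
proof -
  assume len: "length a = length b" and ne: "a \<noteq> b"
  have ex: "\<exists>t. t < length a \<and> a ! t \<noteq> b ! t" using len ne nth_equalityI by blast
  define i where "i = (LEAST t. t < length a \<and> a ! t \<noteq> b ! t)"
  have i: "i < length a" "a ! i \<noteq> b ! i" using LeastI_ex[OF ex] unfolding i_def by auto
  have before: "\<And>t. t < i \<Longrightarrow> a ! t = b ! t"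
    using not_less_Least i(1) unfolding i_def by fastforce
  have tk: "take i a = take i b"
    by (rule nth_equalityI) (use len i(1) before in auto)
  show ?thesis
  proof (cases "a ! i > b ! i")
    case True then show ?thesis using tk i len unfolding lex_gt_def by auto
  next
    case False
    then have "b ! i > a ! i" using i(2) by simp
    then show ?thesis using tk i len unfolding lex_gt_def by (metis)
  qed
qed

lemma lex_gt_pos: "length X = length Y \<Longrightarrow> i < length X \<Longrightarrow> X ! i > 0 \<Longrightarrow> i < b \<Longrightarrow>
   (\<forall>t<b. t < length Y \<longrightarrow> Y ! t = 0) \<Longrightarrow> lex_gt X Y"
proof -
  assume len: "length X = length Y" and i: "i < length X" "X ! i > 0" "i < b"
    and Y: "\<forall>t<b. t < length Y \<longrightarrow> Y ! t = 0"
  have ex: "\<exists>t. t < length X \<and> X ! t > 0" using i by blast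
  define m where "m = (LEAST t. t < length X \<and> X ! t > 0)"
  have m: "m < length X" "X ! m > 0" using LeastI_ex[OF ex] unfolding m_def by auto
  have mi: "m \<le> i" unfolding m_def using i by (simp add: Least_le)
  have before: "\<And>t. t < m \<Longrightarrow> X ! t = 0"
    using not_less_Least m(1) unfolding m_def by fastforce
  have tk: "take m X = take m Y"
    by (rule nth_equalityI) (use len m(1) before Y mi i in auto)
  have "Y ! m = 0" using Y mi i len by auto
  with m tk len show ?thesis unfolding lex_gt_def by auto
qed

lemma max_exists:
  assumes "finite F" "F \<noteq> {}" "\<forall>a\<in>F. length a = k"
  shows "\<exists>a\<in>F. \<forall>b\<in>F. b \<noteq> a \<longrightarrow> lex_gt a b"
  using assms
proof (induction F rule: finite_ne_induct)
  case (singleton x) then show ?case by auto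
next
  case (insert x F)
  then obtain m where m: "m \<in> F" "\<forall>b\<in>F. b \<noteq> m \<longrightarrow> lex_gt m b" by auto
  show ?case
  proof (cases "lex_gt x m")
    case True
    have "\<forall>b\<in>insert x F. b \<noteq> x \<longrightarrow> lex_gt x b"
    proof (intro ballI impI)
      fix b assume b: "b \<in> insert x F" "b \<noteq> x"
      then have bF: "b \<in> F" by simp
      show "lex_gt x b"
      proof (cases "b = m")
        case True with \<open>lex_gt x m\<close> show ?thesis by simp
      next
        case False
        with m(2) bF have "lex_gt m b" by simp
        from lex_gt_trans[OF \<open>lex_gt x m\<close> this] show ?thesis .
      qed
    qed
    then show ?thesis by blast
  next
    case False
    have "x \<noteq> m" using insert.hyps m(1) by auto
    moreover have "length x = length m" using insert.prems m(1) by auto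
    ultimately have "lex_gt m x" using False lex_gt_total by blast
    then have "\<forall>b\<in>insert x F. b \<noteq> m \<longrightarrow> lex_gt m b" using m(2) by simp
    then show ?thesis using m(1) by blast
  qed
qed

lemma maxexpr_prop:
  assumes "finite (exprs L M)" "exprs L M \<noteq> {}"
  shows "maxexpr L M \<in> exprs L M \<and> (\<forall>b\<in>exprs L M. b \<noteq> maxexpr L M \<longrightarrow> lex_gt (maxexpr L M) b)"
proof -
  have "\<forall>a\<in>exprs L M. length a = length L" unfolding exprs_def by auto
  from max_exists[OF assms this] obtain a where a: "a \<in> exprs L M" "\<forall>b\<in>exprs L M. b \<noteq> a \<longrightarrow> lex_gt a b" by blast
  have "maxexpr L M = a" unfolding maxexpr_def
  proof (rule the_equality)
    show "a \<in> exprs L M \<and> (\<forall>b\<in>exprs L M. b \<noteq> a \<longrightarrow> lex_gt a b)" using a by blast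
  next
    fix a' assume a': "a' \<in> exprs L M \<and> (\<forall>b\<in>exprs L M. b \<noteq> a' \<longrightarrow> lex_gt a' b)"
    show "a' = a"
    proof (rule ccontr)
      assume ne: "a' \<noteq> a"
      then have "lex_gt a' a" using a' a(1) by simp
      moreover have "lex_gt a a'" using a(2) a' ne by simp
      ultimately show False using lex_gt_asym by blast
    qed
  qed
  then show ?thesis using a by simp
qed

definition ev :: "'v multiset list \<Rightarrow> nat multiset \<Rightarrow> 'v multiset" where
  "ev L A = sum_mset (image_mset (\<lambda>i. L ! i) A)"

definition V :: "'v multiset list \<Rightarrow> nat multiset \<Rightarrow> nat list" where
  "V L A = map (count A) [0..<length L]"

lemma sum_repeat:
  "set_mset A \<subseteq> {..<length L} \<Longrightarrow> ev L A = (\<Sum>i<length L. repeat_mset (count A i) (L ! i))"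
proof (induction A)
  case empty then show ?case by (simp add: ev_def)
next
  case (add x A)
  have x: "x < length L" using add.prems by auto
  have IH: "ev L A = (\<Sum>i<length L. repeat_mset (count A i) (L ! i))" using add by auto
  have "(\<Sum>i<length L. repeat_mset (count (add_mset x A) i) (L ! i))
      = (\<Sum>i<length L. repeat_mset (count A i) (L ! i) + (if i = x then L ! i else {#}))"
    by (rule sum.cong) (auto simp: repeat_mset_distrib)
  also have "\<dots> = (\<Sum>i<length L. repeat_mset (count A i) (L ! i)) + (\<Sum>i<length L. (if i = x then L ! i else {#}))"
    by (rule sum.distrib)
  also have "(\<Sum>i<length L. (if i = x then L ! i else {#})) = L ! x"
    using x by (simp add: sum.delta)
  finally show ?case using IH by (simp add: ev_def add.commute)
qed

lemma V_in_exprs: "set_mset A \<subseteq> {..<length L} \<Longrightarrow> V L A \<in> exprs L (ev L A)"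
  unfolding exprs_def V_def using sum_repeat[of A L] by (auto intro!: sum.cong)

lemma exprs_V: "a \<in> exprs L M \<Longrightarrow> \<exists>A. set_mset A \<subseteq> {..<length L} \<and> M = ev L A \<and> a = V L A"
proof -
  assume a: "a \<in> exprs L M"
  define A where "A = (\<Sum>i<length L. replicate_mset (a ! i) i)"
  have cA: "\<And>t. count A t = (if t < length L then a ! t else 0)"
    unfolding A_def count_sum by (simp add: count_replicate_mset sum.delta' if_distrib cong: if_cong)
  have sA: "set_mset A \<subseteq> {..<length L}"
  proof
    fix t assume "t \<in># A"
    then have "count A t > 0" by simp
    then show "t \<in> {..<length L}" using cA[of t] by (auto split: if_splits)
  qed
  have la: "length a = length L" using a unfolding exprs_def by simp
  have "V L A = a" unfolding V_def by (rule nth_equalityI) (auto simp: la cA)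
  moreover have "M = ev L A"
    using a sum_repeat[OF sA] unfolding exprs_def by (auto simp: cA intro!: sum.cong)
  ultimately show ?thesis using sA by blast
qed

lemma V_nth: "i < length L \<Longrightarrow> V L A ! i = count A i"
  unfolding V_def by simp

lemma size_ev: "edge_list L \<Longrightarrow> set_mset A \<subseteq> {..<length L} \<Longrightarrow> size (ev L A) = 2 * size A"
proof (induction A)
  case empty then show ?case by (simp add: ev_def)
next
  case (add x A)
  have "x < length L" using add.prems by auto
  then have "L ! x \<in> set L" by simp
  then have "size (L ! x) = 2" using add.prems(1) unfolding edge_list_def by auto
  then show ?case using add by (auto simp: ev_def)
qed

lemma ev_add: "ev L (add_mset i A) = L ! i + ev L A"
  by (simp add: ev_def)

definition idx :: "'v multiset list \<Rightarrow> 'v multiset \<Rightarrow> nat" where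
  "idx L x = (SOME i. i < length L \<and> L ! i = x)"

lemma idx: "x \<in> set L \<Longrightarrow> idx L x < length L \<and> L ! (idx L x) = x"
  unfolding idx_def by (rule someI_ex) (simp add: in_set_conv_nth)

lemma idx_nth: "distinct L \<Longrightarrow> i < length L \<Longrightarrow> idx L (L ! i) = i"
  using idx[of "L ! i" L] nth_eq_iff_index_eq by (metis nth_mem)

lemma to_idx:
  assumes "set_mset T \<subseteq> set L"
  shows "ev L (image_mset (idx L) T) = sum_mset T \<and> set_mset (image_mset (idx L) T) \<subseteq> {..<length L}
     \<and> size (image_mset (idx L) T) = size T"
proof -
  have "image_mset (\<lambda>i. L ! i) (image_mset (idx L) T) = T"
  proof -
    have "image_mset (\<lambda>i. L ! i) (image_mset (idx L) T) = image_mset (\<lambda>x. x) T"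
      unfolding multiset.map_comp o_def by (rule image_mset_cong) (use assms idx in auto)
    then show ?thesis by simp
  qed
  then show ?thesis using assms idx by (auto simp: ev_def)
qed

lemma mingens_alt: "M \<in> mingens L n \<longleftrightarrow> (\<exists>T. size T = n \<and> set_mset T \<subseteq> set L \<and> M = sum_mset T)"
proof
  assume "M \<in> mingens L n"
  then obtain A where A: "M = ev L A" "size A = n" "set_mset A \<subseteq> {..<length L}"
    unfolding mingens_def ev_def by blast
  then show "\<exists>T. size T = n \<and> set_mset T \<subseteq> set L \<and> M = sum_mset T"
    by (intro exI[of _ "image_mset (\<lambda>i. L ! i) A"]) (auto simp: ev_def)
next
  assume "\<exists>T. size T = n \<and> set_mset T \<subseteq> set L \<and> M = sum_mset T"
  then obtain T where T: "size T = n" "set_mset T \<subseteq> set L" "M = sum_mset T" by blast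
  show "M \<in> mingens L n" unfolding mingens_def
    by (rule CollectI, rule exI[of _ "image_mset (idx L) T"]) (use to_idx[OF T(2)] T in \<open>auto simp: ev_def\<close>)
qed

lemma mingensI: "set_mset A \<subseteq> {..<length L} \<Longrightarrow> size A = n \<Longrightarrow> ev L A \<in> mingens L n"
  unfolding mingens_def ev_def by blast

lemma mingensE: "M \<in> mingens L n \<Longrightarrow> \<exists>A. set_mset A \<subseteq> {..<length L} \<and> size A = n \<and> M = ev L A"
  unfolding mingens_def ev_def by blast

lemma edge_dvd_of:
  assumes "set_mset A \<subseteq> {..<length L}" "size A = n" "i \<in># A"
  shows "edge_dvd L 1 (L ! i) n (ev L A)"
proof -
  have A: "A = add_mset i (A - {#i#})" using assms(3) by simp
  have "ev L (A - {#i#}) \<in> mingens L (n - 1)"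
    by (rule mingensI) (use assms in \<open>auto dest: in_diffD simp: size_Diff_singleton\<close>)
  moreover have "ev L A = L ! i + ev L (A - {#i#})" by (subst A, simp add: ev_add)
  ultimately show ?thesis unfolding edge_dvd_def by blast
qed

lemma EO1:
  assumes L: "edge_list L" and n: "n \<ge> 1"
    and A: "set_mset A \<subseteq> {..<length L}" "size A = n" "i \<in># A"
  shows "edge_of L n (ev L A) \<le> i"
proof (cases "n = 1")
  case True
  then obtain j where "A = {#j#}" using A(2) size_1_singleton_mset by auto
  with A(3) have Ai: "A = {#i#}" by simp
  have il: "i < length L" using A by auto
  have "(THE i'. i' < length L \<and> L ! i' = ev L A) = i"
  proof (rule the_equality)
    show "i < length L \<and> L ! i = ev L A" using il Ai by (simp add: ev_def)
  next
    fix i' assume "i' < length L \<and> L ! i' = ev L A"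
    then show "i' = i" using Ai il L nth_eq_iff_index_eq unfolding edge_list_def by (auto simp: ev_def)
  qed
  then show ?thesis using True unfolding edge_of_def by simp
next
  case False
  have "i < length L" using A by auto
  then have "(LEAST i. i < length L \<and> edge_dvd L 1 (L ! i) n (ev L A)) \<le> i"
    using edge_dvd_of[OF A] by (simp add: Least_le)
  then show ?thesis using False unfolding edge_of_def by simp
qed

lemma EO2:
  assumes L: "edge_list L" and n: "n \<ge> 1" and M: "M \<in> mingens L n"
  shows "\<exists>A. set_mset A \<subseteq> {..<length L} \<and> size A = n \<and> M = ev L A \<and> edge_of L n M \<in># A
     \<and> edge_of L n M < length L"
proof -
  obtain A0 where A0: "set_mset A0 \<subseteq> {..<length L}" "size A0 = n" "M = ev L A0"
    using mingensE[OF M] by blast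
  obtain i0 where i0: "i0 \<in># A0" using A0(2) n by (metis One_nat_def Suc_le_eq multiset_nonemptyE size_empty less_irrefl)
  show ?thesis
  proof (cases "n = 1")
    case True
    then obtain j where "A0 = {#j#}" using A0(2) size_1_singleton_mset by auto
    with i0 have Ai: "A0 = {#i0#}" by simp
    have "edge_of L n M \<le> i0" using EO1[OF L n A0(1,2) i0] A0(3) by simp
    have eo: "edge_of L n M = (THE i'. i' < length L \<and> L ! i' = M)" using True unfolding edge_of_def by simp
    have "(THE i'. i' < length L \<and> L ! i' = M) = i0"
    proof (rule the_equality)
      show "i0 < length L \<and> L ! i0 = M" using A0 Ai by (simp add: ev_def)
    next
      fix i' assume "i' < length L \<and> L ! i' = M"
      then show "i' = i0" using Ai A0 L nth_eq_iff_index_eq unfolding edge_list_def by (auto simp: ev_def)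
    qed
    then show ?thesis using eo A0 i0 by auto
  next
    case False
    let ?P = "\<lambda>i. i < length L \<and> edge_dvd L 1 (L ! i) n M"
    have "?P i0" using edge_dvd_of[OF A0(1,2) i0] A0 i0 by auto
    then have b: "?P (LEAST i. ?P i)" by (rule LeastI)
    have eo: "edge_of L n M = (LEAST i. ?P i)" using False unfolding edge_of_def by simp
    obtain m3 where m3: "m3 \<in> mingens L (n - 1)" "M = L ! (edge_of L n M) + m3"
      using b eo unfolding edge_dvd_def by auto
    obtain A3 where A3: "set_mset A3 \<subseteq> {..<length L}" "size A3 = n - 1" "m3 = ev L A3"
      using mingensE[OF m3(1)] by blast
    have "edge_of L n M < length L" using b eo by simp
    then show ?thesis using A3 m3 n
      by (intro exI[of _ "add_mset (edge_of L n M) A3"]) (auto simp: ev_add)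
  qed
qed

lemma size_mingens: "edge_list L \<Longrightarrow> M \<in> mingens L n \<Longrightarrow> size M = 2 * n"
  using mingensE size_ev by metis

lemma EO3:
  assumes L: "edge_list L" and n: "n \<ge> 1" and M: "M \<in> mingens L n"
    and a: "a \<in> exprs L M" and t: "t < edge_of L n M" "t < length a"
  shows "a ! t = 0"
proof (rule ccontr)
  assume ne: "a ! t \<noteq> 0"
  obtain A where A: "set_mset A \<subseteq> {..<length L}" "M = ev L A" "a = V L A" using exprs_V[OF a] by blast
  have "size M = 2 * size A" using size_ev[OF L A(1)] A(2) by simp
  then have sA: "size A = n" using size_mingens[OF L M] by simp
  have tl: "t < length L" using t(2) A(3) by (simp add: V_def)
  have "count A t > 0" using ne A(3) V_nth[OF tl] by simp
  then have "t \<in># A" by simp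
  from EO1[OF L n A(1) sA this] A(2) t(1) show False by simp
qed

lemma exprs_fin_ne:
  assumes L: "edge_list L" and M: "M \<in> mingens L n"
  shows "finite (exprs L M) \<and> exprs L M \<noteq> {}"
proof
  have "exprs L M \<subseteq> {xs. set xs \<subseteq> {..size M} \<and> length xs = length L}"
  proof
    fix a assume a: "a \<in> exprs L M"
    obtain A where A: "set_mset A \<subseteq> {..<length L}" "M = ev L A" "a = V L A" using exprs_V[OF a] by blast
    have "size M = 2 * size A" using size_ev[OF L A(1)] A(2) by simp
    moreover have "\<And>i. count A i \<le> size A" by (rule count_le_size)
    ultimately have "\<And>i. count A i \<le> size M" by (metis le_trans mult_2 le_add1)
    then show "a \<in> {xs. set xs \<subseteq> {..size M} \<and> length xs = length L}"
      using A(3) by (auto simp: V_def)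
  qed
  then show "finite (exprs L M)" by (rule finite_subset) (simp add: finite_lists_length_eq)
next
  obtain A where "set_mset A \<subseteq> {..<length L}" "size A = n" "M = ev L A" using mingensE[OF M] by blast
  then show "exprs L M \<noteq> {}" using V_in_exprs by blast
qed

lemma maxexpr_mingens:
  assumes "edge_list L" "M \<in> mingens L n"
  shows "maxexpr L M \<in> exprs L M \<and> (\<forall>b\<in>exprs L M. b \<noteq> maxexpr L M \<longrightarrow> lex_gt (maxexpr L M) b)"
  using maxexpr_prop exprs_fin_ne[OF assms] by blast

lemma exprs_det: "a \<in> exprs L M \<Longrightarrow> a \<in> exprs L N \<Longrightarrow> M = N"
  unfolding exprs_def by auto

lemma gen_gt_total:
  assumes "edge_list L" "M \<in> mingens L n" "N \<in> mingens L n" "M \<noteq> N"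
  shows "gen_gt L M N \<or> gen_gt L N M"
proof -
  have 1: "maxexpr L M \<in> exprs L M" "maxexpr L N \<in> exprs L N"
    using maxexpr_mingens assms by blast+
  then have "maxexpr L M \<noteq> maxexpr L N" using exprs_det assms(4) by metis
  moreover have "length (maxexpr L M) = length (maxexpr L N)" using 1 unfolding exprs_def by simp
  ultimately show ?thesis unfolding gen_gt_def using lex_gt_total by blast
qed

lemma gen_gt_trans: "gen_gt L M N \<Longrightarrow> gen_gt L N P \<Longrightarrow> gen_gt L M P"
  unfolding gen_gt_def using lex_gt_trans by blast

lemma gen_gt_irrefl: "\<not> gen_gt L M M"
  unfolding gen_gt_def using lex_gt_irrefl by blast

definition rk :: "'v multiset list \<Rightarrow> nat \<Rightarrow> 'v multiset \<Rightarrow> nat" where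
  "rk L n M = card {N \<in> mingens L n. gen_gt L N M}"

lemma rk_less:
  assumes fin: "finite (mingens L n)" and M: "M \<in> mingens L n" and g: "gen_gt L M M'"
  shows "rk L n M < rk L n M'"
proof -
  have "{N \<in> mingens L n. gen_gt L N M} \<subset> {N \<in> mingens L n. gen_gt L N M'}"
    using g M gen_gt_trans gen_gt_irrefl by blast
  then show ?thesis unfolding rk_def by (rule psubset_card_mono[rotated]) (use fin in simp)
qed

lemma rk_inj:
  assumes L: "edge_list L" and fin: "finite (mingens L n)"
  shows "inj_on (rk L n) (mingens L n)"
proof (rule inj_onI)
  fix M N assume M: "M \<in> mingens L n" and N: "N \<in> mingens L n" and eq: "rk L n M = rk L n N"
  show "M = N"
  proof (rule ccontr)
    assume "M \<noteq> N"
    then have "gen_gt L M N \<or> gen_gt L N M" using gen_gt_total[OF L M N] by blast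
    then show False using rk_less[OF fin M, of N] rk_less[OF fin N, of M] eq by auto
  qed
qed

lemma rk_bound:
  assumes fin: "finite (mingens L n)" and M: "M \<in> mingens L n"
  shows "rk L n M < card (mingens L n)"
proof -
  have "{N \<in> mingens L n. gen_gt L N M} \<subseteq> mingens L n - {M}" using gen_gt_irrefl by blast
  then have "rk L n M \<le> card (mingens L n - {M})" unfolding rk_def by (rule card_mono[rotated]) (use fin in simp)
  also have "\<dots> < card (mingens L n)" using fin M by (metis card_Diff1_less)
  finally show ?thesis .
qed

lemma rk_image:
  assumes L: "edge_list L" and fin: "finite (mingens L n)"
  shows "rk L n ` mingens L n = {..<card (mingens L n)}"
proof (rule card_subset_eq)
  show "finite {..<card (mingens L n)}" by simp
  show "rk L n ` mingens L n \<subseteq> {..<card (mingens L n)}" using rk_bound[OF fin] by auto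
  show "card (rk L n ` mingens L n) = card {..<card (mingens L n)}"
    using card_image[OF rk_inj[OF L fin]] by simp
qed

lemma gen_eq:
  assumes L: "edge_list L" and fin: "finite (mingens L n)" and H: "H \<in> mingens L n"
    and t: "rk L n H = t - 1"
  shows "gen L n t = H"
  unfolding gen_def
proof (rule the_equality)
  show "H \<in> mingens L n \<and> card {N \<in> mingens L n. gen_gt L N H} = t - 1" using H t unfolding rk_def by simp
next
  fix M assume "M \<in> mingens L n \<and> card {N \<in> mingens L n. gen_gt L N M} = t - 1"
  then show "M = H" using H t rk_inj[OF L fin] unfolding rk_def inj_on_def by auto
qed

lemma gen_props:
  assumes L: "edge_list L" and fin: "finite (mingens L n)" and t: "1 \<le> t" "t \<le> card (mingens L n)"
  shows "gen L n t \<in> mingens L n \<and> rk L n (gen L n t) = t - 1"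
proof -
  have "t - 1 \<in> rk L n ` mingens L n" using rk_image[OF L fin] t by auto
  then obtain H where H: "H \<in> mingens L n" "rk L n H = t - 1" by auto
  with gen_eq[OF L fin H(1) H(2)] show ?thesis by simp
qed

lemma colon_principal: "colon (principal X) M = principal (X - M)"
  unfolding colon_def principal_def by (auto simp: subset_eq_diff_conv)

theorem lemma4p11:
  fixes L :: "'v multiset list" and n k' j :: nat
  assumes "edge_list L"
    and "n \<ge> 1" and "k' \<ge> 1" and "1 \<le> j" and "j \<le> k'"
    and "k' + 1 \<le> card (mingens L n)"
    and "\<not> colon (principal (gen L n j)) (gen L n (k' + 1))
            \<subseteq> colon (powI L (n + 1)) (gen L n (k' + 1))"
    and "edge_of L n (gen L n j) < edge_of L n (gen L n (k' + 1))"
  shows "\<exists>i. 1 \<le> i \<and> i \<le> k' \<and>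
     (\<exists>x. colon (principal (gen L n i)) (gen L n (k' + 1)) = principal {#x#}) \<and>
     colon (principal (gen L n j)) (gen L n (k' + 1))
        \<subseteq> colon (principal (gen L n i)) (gen L n (k' + 1)) \<and>
     edge_of L n (gen L n i) \<le> edge_of L n (gen L n j)"
proof -
  note L = assms(1) and n = assms(2)
  have fin: "finite (mingens L n)" using assms(3,6) by (metis card.infinite not_one_le_zero le_add2 order_trans)
  define M where "M = gen L n (k' + 1)"
  define N where "N = gen L n j"
  have Mp: "M \<in> mingens L n" "rk L n M = k'" using gen_props[OF L fin, of "k'+1"] assms(6) unfolding M_def by auto
  have Np: "N \<in> mingens L n" using gen_props[OF L fin, of j] assms(4,5,6) unfolding N_def by auto
  define a where "a = edge_of L n N"
  define b where "b = edge_of L n M"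
  have ab: "a < b" using assms(8) unfolding a_def b_def M_def N_def .
  obtain AN where AN: "set_mset AN \<subseteq> {..<length L}" "size AN = n" "N = ev L AN" "a \<in># AN" "a < length L"
    using EO2[OF L n Np] unfolding a_def by blast
  obtain AM where AM: "set_mset AM \<subseteq> {..<length L}" "size AM = n" "M = ev L AM"
    using mingensE[OF Mp(1)] by blast
  define Rm where "Rm = image_mset (\<lambda>i. L ! i) AM"
  define Sm where "Sm = image_mset (\<lambda>i. L ! i) AN"
  define e where "e = L ! a"
  have RmE: "set_mset Rm \<subseteq> set L" unfolding Rm_def using AM(1) by auto
  have SmE: "set_mset Sm \<subseteq> set L" unfolding Sm_def using AN(1) by auto
  have sRm: "size Rm = n" "sum_mset Rm = M" unfolding Rm_def using AM by (auto simp: ev_def)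
  have sSm: "size Sm = n" "sum_mset Sm = N" unfolding Sm_def using AN by (auto simp: ev_def)
  have eS: "e \<in># Sm" unfolding Sm_def e_def using AN(4) by simp
  have E2: "\<forall>r\<in>set L. size r = 2" using L unfolding edge_list_def by auto
  have notin: "N \<union># M \<notin> powI L (n + 1)"
  proof
    assume inP: "N \<union># M \<in> powI L (n + 1)"
    have "colon (principal N) M \<subseteq> colon (powI L (n + 1)) M"
    proof
      fix w assume "w \<in> colon (principal N) M"
      then have "N \<subseteq># w + M" unfolding colon_def principal_def by simp
      then have "N \<union># M \<subseteq># w + M" by (simp add: subset_mset.sup_least)
      moreover obtain g where "g \<in> mingens L (n + 1)" "g \<subseteq># N \<union># M" using inP unfolding powI_def by blast
      ultimately have "g \<subseteq># w + M" using subset_mset.order_trans by blast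
      then show "w \<in> colon (powI L (n + 1)) M"
        using \<open>g \<in> mingens L (n + 1)\<close> unfolding colon_def powI_def by blast
    qed
    then show False using assms(7) unfolding M_def N_def by simp
  qed
  have noaug: "\<forall>T. set_mset T \<subseteq> set L \<longrightarrow> size T = size Rm + 1 \<longrightarrow> \<not> sum_mset T \<subseteq># N \<union># M"
  proof (intro allI impI notI)
    fix T assume T: "set_mset T \<subseteq> set L" "size T = size Rm + 1" "sum_mset T \<subseteq># N \<union># M"
    have "sum_mset T \<in> mingens L (n + 1)" using T sRm mingens_alt by blast
    then have "N \<union># M \<in> powI L (n + 1)" using T(3) unfolding powI_def by blast
    with notin show False by simp
  qed
  have ia: "idx L e = a" unfolding e_def using idx_nth L AN(5) unfolding edge_list_def by blast
  have noeq: "\<forall>T. set_mset T \<subseteq> set L \<longrightarrow> size T = size Rm \<longrightarrow> e \<in># T \<longrightarrow> sum_mset T \<noteq> sum_mset Rm"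
  proof (intro allI impI notI)
    fix T assume T: "set_mset T \<subseteq> set L" "size T = size Rm" "e \<in># T" "sum_mset T = sum_mset Rm"
    note ti = to_idx[OF T(1)]
    have "a \<in># image_mset (idx L) T" using T(3) ia by (metis image_eqI set_image_mset)
    from EO1[OF L n conjunct1[OF conjunct2[OF ti]] _ this] ti T sRm
    have "edge_of L n M \<le> a" by simp
    with ab show False unfolding b_def by simp
  qed
  have U: "sum_mset Rm \<union># sum_mset Sm \<subseteq># N \<union># M" using sRm sSm by (simp add: subset_mset.sup_commute)
  obtain T u z where T: "set_mset T \<subseteq> set L" "size T = size Rm" "e \<in># T"
     "sum_mset T + {#z#} = sum_mset Rm + {#u#}" "u \<noteq> z" "count (sum_mset Rm) u < count (sum_mset Sm) u"
    using core[OF E2 RmE noaug noeq SmE _ U eS] sRm sSm by blast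
  define H where "H = sum_mset T"
  define AT where "AT = image_mset (idx L) T"
  have AT: "ev L AT = H" "set_mset AT \<subseteq> {..<length L}" "size AT = n"
    using to_idx[OF T(1)] T(2) sRm unfolding AT_def H_def by auto
  have aAT: "a \<in># AT" unfolding AT_def using T(3) ia by (metis image_eqI set_image_mset)
  have Hp: "H \<in> mingens L n" using mingensI[OF AT(2,3)] AT(1) by simp
  have eoH: "edge_of L n H \<le> a" using EO1[OF L n AT(2,3) aAT] AT(1) by simp
  have gt: "gen_gt L H M"
  proof -
    define X where "X = maxexpr L H"
    define Y where "Y = maxexpr L M"
    have X: "X \<in> exprs L H" "\<forall>c\<in>exprs L H. c \<noteq> X \<longrightarrow> lex_gt X c" using maxexpr_mingens[OF L Hp] unfolding X_def by auto
    have Y: "Y \<in> exprs L M" using maxexpr_mingens[OF L Mp(1)] unfolding Y_def by auto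
    have lX: "length X = length L" "length Y = length L" using X Y unfolding exprs_def by auto
    have VH: "V L AT \<in> exprs L H" using V_in_exprs[OF AT(2)] AT(1) by simp
    have Va: "V L AT ! a > 0" using V_nth[OF AN(5)] aAT by simp
    have lV: "length (V L AT) = length L" by (simp add: V_def)
    have "\<exists>i<b. i < length X \<and> X ! i > 0"
    proof (cases "X = V L AT")
      case True then show ?thesis using Va ab AN(5) lX by auto
    next
      case False
      then have "lex_gt X (V L AT)" using X VH by auto
      then obtain d where d: "d < length X" "take d X = take d (V L AT)" "X ! d > V L AT ! d"
        unfolding lex_gt_def by blast
      show ?thesis
      proof (cases "d \<le> a")
        case True then show ?thesis using d ab by (intro exI[of _ d]) auto
      next
        case False
        then have "X ! a = V L AT ! a" using take_eq_nth[OF d(2), of a] lX lV AN(5) by simp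
        then show ?thesis using Va ab AN(5) lX by (intro exI[of _ a]) auto
      qed
    qed
    then obtain i where i: "i < b" "i < length X" "X ! i > 0" by blast
    have "\<forall>t<b. t < length Y \<longrightarrow> Y ! t = 0" using EO3[OF L n Mp(1) Y] unfolding b_def by blast
    from lex_gt_pos[OF _ i(2) i(3) i(1) this] lX have "lex_gt X Y" by simp
    then show ?thesis unfolding gen_gt_def X_def Y_def .
  qed
  define i where "i = rk L n H + 1"
  have rkH: "rk L n H < k'" using rk_less[OF fin Hp gt] Mp(2) by simp
  have gi: "gen L n i = H" using gen_eq[OF L fin Hp] unfolding i_def by simp
  have HM: "H - M = {#u#}"
  proof (subst multiset_eq_iff, intro allI)
    fix q
    have "count H q + (if q = z then 1 else 0) = count M q + (if q = u then 1 else 0)"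
      using arg_cong[OF T(4), of "\<lambda>X. count X q"] sRm unfolding H_def by (auto split: if_splits)
    then show "count (H - M) q = count {#u#} q" using T(5) by (auto split: if_splits)
  qed
  have uN: "{#u#} \<subseteq># N - M" using T(6) sRm sSm by (simp add: in_diff_count)
  have c1: "colon (principal (gen L n i)) (gen L n (k' + 1)) = principal {#u#}"
    using colon_principal[of H M] HM gi unfolding M_def by simp
  have c2: "colon (principal (gen L n j)) (gen L n (k' + 1)) = principal (N - M)"
    using colon_principal[of N M] unfolding M_def N_def by simp
  have c3: "principal (N - M) \<subseteq> principal {#u#}"
  proof
    fix w assume "w \<in> principal (N - M)"
    then have "N - M \<subseteq># w" unfolding principal_def by simp
    with uN have "{#u#} \<subseteq># w" by (rule subset_mset.order_trans)
    then show "w \<in> principal {#u#}" unfolding principal_def by simp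
  qed
  have i1: "1 \<le> i" "i \<le> k'" unfolding i_def using rkH by auto
  have e1: "edge_of L n (gen L n i) \<le> edge_of L n (gen L n j)"
    using eoH gi unfolding a_def N_def by simp
  show ?thesis
    apply (rule exI[of _ i])
    using i1 c1 c2 c3 e1 by blast
qed

end
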